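(* Let $m\ge 1$ and let $G=\overline{B(K_m,K_3)}$ be a graph whose vertex set is the disjoint union of a clique $K_m$ and a clique $K_3$ with vertices $1,2,3$, with arbitrary edges between $V(K_m)$ and $\{1,2,3\}$, subject to the conditions that no vertex of $K_m$ is adjacent to all three of $1,2,3$ (i.e. $N_{123}=\emptyset$) and every vertex of $K_m$ is adjacent to at least one of $1,2,3$ (i.e. $N_{\overline{1}\overline{2}\overline{3}}=\emptyset$). Then $G$ is word-representable.
   Context: A graph $G=(V,E)$ is word-representable if there exists a word $w$ over the alphabet $V$, containing every letter of $V$ at least once, such that for all distinct $x,y\in V$, the letters $x$ and $y$ alternate in $w$ (i.e., the subword of $w$ obtained by deleting all letters other than $x,y$ has no two equal consecutive letters) if and only if $xy\in E$. For $i\in\{1,2,3\}$, $N_i$ is the set of neighbours of $i$; $N_{123}$ is the set of $v\in V(K_m)$ with $v\in N_1\cap N_2\cap N_3$, and $N_{\overline{1}\overline{2}\overline{3}}$ the set of $v\in V(K_m)$ with $v\notin N_1\cup N_2\cup N_3$. *)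

theory Defs
  imports Main
begin

definition alternate :: "'a list \<Rightarrow> 'a \<Rightarrow> 'a \<Rightarrow> bool" where
  "alternate w x y \<longleftrightarrow> successively (\<noteq>) (filter (\<lambda>z. z = x \<or> z = y) w)"

definition word_representable :: "'a set \<Rightarrow> ('a \<Rightarrow> 'a \<Rightarrow> bool) \<Rightarrow> bool" where
  "word_representable V E \<longleftrightarrow>
     (\<exists>w. set w = V \<and> (\<forall>x\<in>V. \<forall>y\<in>V. x \<noteq> y \<longrightarrow> (alternate w x y \<longleftrightarrow> E x y)))"

end

theory Submission
  imports Defs
begin


lemma filter_one: "distinct xs \<Longrightarrow> y \<notin> set xs \<Longrightarrow>
  filter (\<lambda>z. z = x \<or> z = y) xs = (if x \<in> set xs then [x] else [])"
  by (induction xs) (auto simp: filter_empty_conv)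

lemma succ_map_inj: "x \<noteq> y \<Longrightarrow> set l \<subseteq> {t, s} \<Longrightarrow> t \<noteq> s \<Longrightarrow>
  successively (\<noteq>) (map (\<lambda>u. if u = t then x else y) l) = successively (\<noteq>) l"
  by (induction l rule: induct_list012) auto

lemma subst_diff:
  fixes f :: "'b \<Rightarrow> 'a list"
  assumes d: "\<And>u. distinct (f u)" and dj: "\<And>u v. u \<noteq> v \<Longrightarrow> set (f u) \<inter> set (f v) = {}"
    and x: "x \<in> set (f t)" and y: "y \<in> set (f s)" and ts: "t \<noteq> s"
  shows "successively (\<noteq>) (filter (\<lambda>z. z = x \<or> z = y) (concat (map f w)))
       = successively (\<noteq>) (filter (\<lambda>u. u = t \<or> u = s) w)"
proof -
  have xy: "x \<noteq> y" using dj[OF ts] x y by blast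
  have loc: "filter (\<lambda>z. z = x \<or> z = y) (f u) = (if u = t then [x] else if u = s then [y] else [])" for u
  proof -
    have "x \<in> set (f u) \<longleftrightarrow> u = t" using dj x by blast
    moreover have "y \<in> set (f u) \<longleftrightarrow> u = s" using dj y by blast
    moreover have "filter (\<lambda>z. z = x \<or> z = y) (f u) = filter (\<lambda>z. z = y \<or> z = x) (f u)"
      by meson
    ultimately show ?thesis using filter_one[OF d, where x=y and y=x] filter_one[OF d, where x=x and y=y] ts
      by (cases "u = t"; cases "u = s") (auto simp: filter_empty_conv)
  qed
  have "filter (\<lambda>z. z = x \<or> z = y) (concat (map f w))
      = map (\<lambda>u. if u = t then x else y) (filter (\<lambda>u. u = t \<or> u = s) w)"
    by (induction w) (auto simp: loc ts filter_concat)
  moreover have "set (filter (\<lambda>u. u = t \<or> u = s) w) \<subseteq> {t, s}" by auto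
  ultimately show ?thesis using succ_map_inj[OF xy _ ts] by simp
qed

lemma two_elem: "distinct p \<Longrightarrow> set p = {x, y} \<Longrightarrow> x \<noteq> y \<Longrightarrow> p = [x, y] \<or> p = [y, x]"
proof -
  assume a: "distinct p" "set p = {x, y}" "x \<noteq> y"
  then have "length p = 2" using distinct_card[OF a(1)] by simp
  then obtain a1 a2 where "p = [a1, a2]" by (metis length_0_conv length_Suc_conv numeral_2_eq_2)
  then show ?thesis using a by (auto simp: doubleton_eq_iff)
qed

lemma succ_rep: "x \<noteq> y \<Longrightarrow> successively (\<noteq>) (concat (replicate n [x, y]))"
proof (induction n)
  case 0 then show ?case by simp
next
  case (Suc n) then show ?case by (cases n) auto
qed

lemma subst_same:
  fixes f :: "'b \<Rightarrow> 'a list"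
  assumes d: "\<And>u. distinct (f u)" and dj: "\<And>u v. u \<noteq> v \<Longrightarrow> set (f u) \<inter> set (f v) = {}"
    and x: "x \<in> set (f t)" and y: "y \<in> set (f t)" and xy: "x \<noteq> y"
  shows "successively (\<noteq>) (filter (\<lambda>z. z = x \<or> z = y) (concat (map f w)))"
proof -
  define p where "p = filter (\<lambda>z. z = x \<or> z = y) (f t)"
  have loc: "filter (\<lambda>z. z = x \<or> z = y) (f u) = (if u = t then p else [])" for u
    using dj[of u t] x y by (auto simp: p_def filter_empty_conv)
  have eq: "filter (\<lambda>z. z = x \<or> z = y) (concat (map f w)) = concat (replicate (length (filter (\<lambda>u. u = t) w)) p)"
    by (induction w) (auto simp: loc filter_concat)
  have "p = [x, y] \<or> p = [y, x]"
  proof -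
    have "distinct p" "set p = {x, y}" using d[of t] x y by (auto simp: p_def)
    then show ?thesis using two_elem[OF _ _ xy] by blast
  qed
  then show ?thesis unfolding eq by (elim disjE) (simp_all add: succ_rep xy xy[symmetric])
qed



datatype lt = A | B | C | D | Ee | F | O1 | O2 | O3

definition w0 :: "lt list" where
"w0 = [A,D,B,F,C,O1,Ee,A,O2,D,B,O3,F,C,O1,Ee,A,O2,D,O3,O1,B,F,O2,C,Ee,O3]"

fun pat :: "lt \<Rightarrow> bool \<times> bool \<times> bool" where
"pat A = (True,False,False)" | "pat B = (False,True,False)" | "pat C = (False,False,True)"
| "pat D = (True,True,False)" | "pat Ee = (True,False,True)" | "pat F = (False,True,True)"
| "pat _ = (False,False,False)"

fun isK :: "lt \<Rightarrow> bool" where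
"isK O1 = False" | "isK O2 = False" | "isK O3 = False" | "isK _ = True"

fun adjK :: "lt \<Rightarrow> lt \<Rightarrow> bool" where
"adjK t O1 = fst (pat t)" | "adjK t O2 = fst (snd (pat t))" | "adjK t O3 = snd (snd (pat t))"
| "adjK t _ = True"

definition adjL :: "lt \<Rightarrow> lt \<Rightarrow> bool" where
"adjL t s = (if isK t = isK s then True else if isK t then adjK t s else adjK s t)"

lemma w0_alt: "t \<noteq> s \<Longrightarrow> successively (\<noteq>) (filter (\<lambda>u. u = t \<or> u = s) w0) = adjL t s"
  by (cases t; cases s; simp add: w0_def adjL_def)

lemma w0_set: "set w0 = UNIV"
  apply (auto simp: w0_def) apply (case_tac x) apply auto done


theorem mainTheorem9:
  fixes K :: "'a set" and v1 v2 v3 :: 'a and E :: "'a \<Rightarrow> 'a \<Rightarrow> bool" and m :: nat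
  assumes "finite K" and "card K = m" and "m \<ge> 1"
    and "v1 \<noteq> v2" and "v1 \<noteq> v3" and "v2 \<noteq> v3"
    and "v1 \<notin> K" and "v2 \<notin> K" and "v3 \<notin> K"
    and "\<And>x y. E x y \<longleftrightarrow> E y x"
    and "\<And>x. \<not> E x x"
    and "\<And>x y. x \<in> K \<Longrightarrow> y \<in> K \<Longrightarrow> x \<noteq> y \<Longrightarrow> E x y"
    and "E v1 v2" and "E v1 v3" and "E v2 v3"
    and "\<And>v. v \<in> K \<Longrightarrow> \<not> (E v v1 \<and> E v v2 \<and> E v v3)"
    and "\<And>v. v \<in> K \<Longrightarrow> E v v1 \<or> E v v2 \<or> E v v3"
  shows "word_representable (K \<union> {v1, v2, v3}) E"
proof -
  define S where "S t = (if t = O1 then {v1} else if t = O2 then {v2} else if t = O3 then {v3}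
     else {x\<in>K. (E x v1, E x v2, E x v3) = pat t})" for t
  define f where "f t = (SOME xs. distinct xs \<and> set xs = S t)" for t
  have finS: "finite (S t)" for t using assms(1) by (auto simp: S_def)
  have fp: "distinct (f t) \<and> set (f t) = S t" for t
    unfolding f_def
  proof (rule someI_ex)
    obtain xs where "set xs = S t \<and> distinct xs" using finite_distinct_list[OF finS[of t]] by blast
    then show "\<exists>xs. distinct xs \<and> set xs = S t" by blast
  qed
  have dS: "S t \<inter> S s = {}" if "t \<noteq> s" for t s
    using that assms(4-9) by (cases t; cases s; auto simp: S_def)
  have d: "distinct (f u)" for u using fp by blast
  have dj: "set (f u) \<inter> set (f v) = {}" if "u \<noteq> v" for u v using fp dS[OF that] by simp
  have cover: "(\<Union>t. S t) = K \<union> {v1, v2, v3}"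
  proof
    show "(\<Union>t. S t) \<subseteq> K \<union> {v1, v2, v3}" by (auto simp: S_def split: if_splits)
  next
    show "K \<union> {v1, v2, v3} \<subseteq> (\<Union>t. S t)"
    proof
      fix x assume x: "x \<in> K \<union> {v1, v2, v3}"
      show "x \<in> (\<Union>t. S t)"
      proof (cases "x \<in> K")
        case True
        then have "\<exists>t. x \<in> S t" using assms(16,17)[OF True]
          apply (cases "E x v1"; cases "E x v2"; cases "E x v3")
          by (simp_all add: S_def) (metis lt.distinct pat.simps)+
        then show ?thesis by blast
      next
        case False
        then have "\<exists>t. x \<in> S t" using x
          by (metis (mono_tags, lifting) S_def Un_iff empty_iff insert_iff lt.distinct)
        then show ?thesis by blast
      qed
    qed
  qed
  define W where "W = concat (map f w0)"
  have setW: "set W = K \<union> {v1, v2, v3}"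
    using cover fp by (auto simp: W_def w0_set)
  have Eadj: "E x y = adjL t s" if "x \<in> S t" "y \<in> S s" "t \<noteq> s" for x y t s
  proof -
    have xy: "x \<noteq> y" using dS[OF that(3)] that(1,2) by blast
    show ?thesis using that xy assms(10-15)
      by (cases t; cases s; auto simp: S_def adjL_def)
  qed
  have sameK: "E x y" if "x \<in> S t" "y \<in> S t" "x \<noteq> y" for x y t
    using that assms(12) by (cases t; auto simp: S_def split: if_splits)
  show ?thesis
    unfolding word_representable_def
  proof (intro exI conjI ballI impI)
    show "set W = K \<union> {v1, v2, v3}" by (rule setW)
    fix x y assume x: "x \<in> K \<union> {v1, v2, v3}" and y: "y \<in> K \<union> {v1, v2, v3}" and xy: "x \<noteq> y"
    obtain t where t: "x \<in> S t" using x cover by blast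
    obtain s where s: "y \<in> S s" using y cover by blast
    show "alternate W x y = E x y"
    proof (cases "t = s")
      case True
      then show ?thesis using subst_same[OF d dj, where x=x and t=t and y=y and w=w0] fp t s xy sameK[of x t y]
        by (simp add: alternate_def W_def)
    next
      case False
      then show ?thesis using subst_diff[OF d dj, where x=x and t=t and y=y and s=s and w=w0] fp t s w0_alt[OF False] Eadj[OF t s False]
        by (simp add: alternate_def W_def)
    qed
  qed
qed

end
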